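(* Let $d\ge1$, $s\in(0,1)$ and $0<\lambda\le\Lambda$. There exist $C>0$ and $\gamma>0$, depending only on $d,s,\lambda,\Lambda$, with the following property. Let $K:\mathbb{R}^d\to\mathbb{R}$ be a measurable kernel with $\lambda|y|^{-d-s}\le K(y)\le\Lambda|y|^{-d-s}$ and $K(y)=K(-y)$ for all $y\ne0$. Let $E\subset\mathbb{R}^d$ be a Borel set, $x\in\partial E$ and $r>0$. If $|E\cap B_r(x)|\le\gamma|B_r|$, then \[ \int_{B_r(x)\setminus B_{r/2}(x)}\tilde\chi_E(y)K(x-y)\,dy\ge\frac{C}{r^s}. \]
   Context: $B_\rho(x)$ is the open ball of radius $\rho$ centred at $x$, $B_\rho=B_\rho(0)$, and $|F|$ denotes Lebesgue measure. $\tilde\chi_E=\chi_{\mathbb{R}^d\setminus E}-\chi_E$. *)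

theory Defs
  imports "HOL-Analysis.Analysis"
begin

definition chi_tilde :: "'a set \<Rightarrow> 'a \<Rightarrow> real" where
  "chi_tilde E y = (if y \<in> E then -1 else 1)"

end

theory Submission
  imports Defs
begin

lemma refl_meas:
  fixes x :: "'a::euclidean_space"
  shows "(\<lambda>y. x - y) \<in> lebesgue \<rightarrow>\<^sub>M lebesgue"
proof -
  have "(\<lambda>y::'a. x + (\<Sum>j\<in>Basis. ((\<lambda>_. -1::real) j * (y \<bullet> j)) *\<^sub>R j)) \<in> lebesgue \<rightarrow>\<^sub>M lebesgue"
    by (rule lebesgue_affine_measurable) auto
  moreover have "(\<lambda>y::'a. x + (\<Sum>j\<in>Basis. ((\<lambda>_. -1::real) j * (y \<bullet> j)) *\<^sub>R j)) = (\<lambda>y. x - y)"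
  proof
    fix y :: 'a
    have "(\<Sum>j\<in>Basis. ((\<lambda>_. -1::real) j * (y \<bullet> j)) *\<^sub>R j) = - (\<Sum>j\<in>Basis. (y \<bullet> j) *\<^sub>R j)"
      by (simp add: sum_negf[symmetric])
    then show "x + (\<Sum>j\<in>Basis. ((\<lambda>_. -1::real) j * (y \<bullet> j)) *\<^sub>R j) = x - y"
      by (simp add: euclidean_representation)
  qed
  ultimately show ?thesis by simp
qed

lemma chi_meas:
  assumes "E \<in> sets borel"
  shows "chi_tilde E \<in> borel_measurable lebesgue"
proof -
  have "chi_tilde E = (\<lambda>y. 1 - 2 * indicator E y)"
    by (auto simp: chi_tilde_def fun_eq_iff indicator_def)
  moreover have "E \<in> sets lebesgue" using assms by auto
  ultimately show ?thesis by simp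
qed

lemma key:
  fixes K :: "'a::euclidean_space \<Rightarrow> real" and x :: 'a
  assumes Kmeas: "K \<in> borel_measurable lebesgue"
    and Kb: "\<forall>y. y \<noteq> 0 \<longrightarrow> lam * norm y powr (- real DIM('a) - s) \<le> K y
                   \<and> K y \<le> Lam * norm y powr (- real DIM('a) - s) \<and> K y = K (- y)"
    and E: "E \<in> sets borel" and r: "0 < r" and lam: "0 < lam" "lam \<le> Lam" and s: "0 < s"
  defines "A \<equiv> ball x r - ball x (r/2)"
  shows "integral A (\<lambda>y. chi_tilde E y * K (x - y)) \<ge>
     lam * r powr (- real DIM('a) - s) * measure lebesgue A
     - 2 * Lam * (r/2) powr (- real DIM('a) - s) * measure lebesgue (A \<inter> E)"
proof -
  define e where "e = - real DIM('a) - s"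
  have e: "e \<le> 0" unfolding e_def using s by simp
  define c1 where "c1 = lam * r powr e"
  define c2 where "c2 = 2 * Lam * (r/2) powr e"
  define f where "f = (\<lambda>y. chi_tilde E y * K (x - y))"
  define g where "g = (\<lambda>y. c1 - c2 * (if y \<in> E then 1 else 0::real))"
  have Alm: "A \<in> lmeasurable" unfolding A_def by (intro fmeasurable.Diff) auto
  have AEl: "A \<inter> E \<in> lmeasurable"
    using fmeasurable_Int_fmeasurable[OF Alm, of E] E by auto
  have Asets: "A \<in> sets lebesgue" using Alm by auto
  have normA: "r/2 \<le> norm (x - y)" "norm (x - y) < r" if "y \<in> A" for y
    using that unfolding A_def by (auto simp: dist_norm)
  have Kup: "\<bar>K (x - y)\<bar> \<le> Lam * (r/2) powr e" if "y \<in> A" for y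
  proof -
    have ne: "x - y \<noteq> 0" using normA[OF that] r by auto
    have kk: "lam * norm (x - y) powr e \<le> K (x - y) \<and> K (x - y) \<le> Lam * norm (x - y) powr e \<and> K (x - y) = K (- (x - y))"
      using Kb ne unfolding e_def by blast
    have "lam * norm (x - y) powr e \<le> K (x - y)" "K (x - y) \<le> Lam * norm (x - y) powr e"
      using kk by simp_all
    moreover have "norm (x - y) powr e \<le> (r/2) powr e"
      by (rule powr_mono2'[OF e]) (use r normA[OF that] in auto)
    moreover have "0 \<le> norm (x - y) powr e" by simp
    ultimately show ?thesis using lam
      by (smt (verit) mult_left_mono mult_nonneg_nonneg)
  qed
  have fg: "g y \<le> f y" if "y \<in> A" for y
  proof -
    have ne: "x - y \<noteq> 0" using normA[OF that] r by auto
    have kk: "lam * norm (x - y) powr e \<le> K (x - y) \<and> K (x - y) \<le> Lam * norm (x - y) powr e \<and> K (x - y) = K (- (x - y))"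
      using Kb ne unfolding e_def by blast
    have lo: "lam * norm (x - y) powr e \<le> K (x - y)"
      using kk by simp
    have "r powr e \<le> norm (x - y) powr e"
      by (rule powr_mono2'[OF e]) (use r normA[OF that] in auto)
    then have "c1 \<le> K (x - y)" unfolding c1_def using lo lam
      by (smt (verit) mult_left_mono)
    moreover have "c1 \<le> Lam * (r/2) powr e"
    proof -
      have "r powr e \<le> (r/2) powr e" by (rule powr_mono2'[OF e]) (use r in auto)
      then show ?thesis unfolding c1_def using lam
        by (smt (verit) mult_left_mono mult_right_mono powr_ge_zero)
    qed
    ultimately show ?thesis using Kup[OF that]
      unfolding f_def g_def c2_def chi_tilde_def by auto
  qed
  have fmeas: "f \<in> borel_measurable (lebesgue_on A)"
  proof -
    have "(\<lambda>y. K (x - y)) \<in> borel_measurable lebesgue"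
      using measurable_compose[OF refl_meas Kmeas] .
    then have "f \<in> borel_measurable lebesgue"
      unfolding f_def using chi_meas[OF E] by simp
    then show ?thesis by (rule measurable_restrict_space1)
  qed
  have fint: "f integrable_on A"
  proof (rule measurable_bounded_by_integrable_imp_integrable[OF fmeas _ _ Asets])
    show "(\<lambda>_. \<bar>chi_tilde E 0\<bar> * 0 + Lam * (r/2) powr e) integrable_on A"
      using integrable_on_const[OF Alm] by simp
    fix y assume "y \<in> A"
    then show "norm (f y) \<le> \<bar>chi_tilde E 0\<bar> * 0 + Lam * (r/2) powr e"
      using Kup unfolding f_def chi_tilde_def by auto
  qed
  have i1: "(\<lambda>_. c1) integrable_on A" using integrable_on_const[OF Alm] .
  have i2: "(\<lambda>y. c2 * (if y \<in> E then 1 else 0::real)) integrable_on A"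
  proof -
    have "(\<lambda>_. 1::real) integrable_on (E \<inter> A)"
      using integrable_on_const[of "E \<inter> A"] AEl by (simp add: Int_commute)
    then have "(\<lambda>y. if y \<in> E then 1 else 0::real) integrable_on A"
      using integrable_restrict_Int[where S=E and T=A and f="\<lambda>_. 1::real"] by simp
    then show ?thesis by (rule integrable_on_mult_right)
  qed
  have gint: "g integrable_on A" unfolding g_def using integrable_diff[OF i1 i2] .
  have "integral A g = c1 * measure lebesgue A - c2 * measure lebesgue (A \<inter> E)"
  proof -
    have "integral A g = integral A (\<lambda>_. c1) - integral A (\<lambda>y. c2 * (if y \<in> E then 1 else 0::real))"
      unfolding g_def by (rule integral_diff[OF i1 i2])
    also have "integral A (\<lambda>_. c1) = c1 * measure lebesgue A"
      using lmeasure_integral[OF Alm] integral_mult_right[of A c1 "\<lambda>_. 1::real"] by simp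
    also have "integral A (\<lambda>y. c2 * (if y \<in> E then 1 else 0::real)) = c2 * integral A (\<lambda>y. if y \<in> E then 1 else 0::real)"
      by simp
    also have "integral A (\<lambda>y. if y \<in> E then 1 else 0::real) = measure lebesgue (A \<inter> E)"
      using integral_restrict_Int[where T=A and S=E and f="\<lambda>_. 1::real"] lmeasure_integral[OF AEl]
      by (simp add: Int_commute)
    finally show ?thesis .
  qed
  moreover have "integral A g \<le> integral A f"
    using integral_le[OF gint fint fg] by simp
  ultimately show ?thesis unfolding f_def c1_def c2_def e_def by simp
qed


lemma measure_ball_scale:
  assumes "0 \<le> \<rho>"
  shows "measure lebesgue (ball (c::'a::euclidean_space) \<rho>) = \<rho> ^ DIM('a) * measure lebesgue (ball (0::'a) 1)"
  using content_ball_conv_unit_ball[OF assms, of c] by (simp add: measure_completion)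

theorem lemma4p1:
  fixes s lam Lam :: real
  assumes "0 < s" "s < 1" "0 < lam" "lam \<le> Lam"
  shows "\<exists>C>0. \<exists>\<gamma>>0. \<forall>(K :: 'a::euclidean_space \<Rightarrow> real) E x r.
     K \<in> borel_measurable lebesgue \<longrightarrow>
     (\<forall>y. y \<noteq> 0 \<longrightarrow> lam * norm y powr (- real DIM('a) - s) \<le> K y
                   \<and> K y \<le> Lam * norm y powr (- real DIM('a) - s)
                   \<and> K y = K (- y)) \<longrightarrow>
     E \<in> sets borel \<longrightarrow> x \<in> frontier E \<longrightarrow> 0 < r \<longrightarrow>
     measure lebesgue (E \<inter> ball x r) \<le> \<gamma> * measure lebesgue (ball (0::'a) r) \<longrightarrow>
     integral (ball x r - ball x (r/2)) (\<lambda>y. chi_tilde E y * K (x - y)) \<ge> C / r powr s"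
proof -
  define d where "d = real DIM('a)"
  define V where "V = measure lebesgue (ball (0::'a) 1)"
  have V: "0 < V" unfolding V_def using content_ball_pos[of 1 "0::'a"] by (simp add: measure_completion)
  define q where "q = 1 - (1/2::real) ^ DIM('a)"
  have q: "0 < q"
  proof -
    have "(1/2::real) ^ DIM('a) < 1" by (simp add: power_less_one_iff)
    then show ?thesis unfolding q_def by simp
  qed
  define C where "C = V * lam * q / 2"
  define \<gamma> where "\<gamma> = lam * q / (4 * Lam * 2 powr (d + s))"
  have C: "C > 0" unfolding C_def using V q assms by simp
  have g: "\<gamma> > 0" unfolding \<gamma>_def using q assms by simp
  show ?thesis
  proof (rule exI[of _ C], intro conjI C, rule exI[of _ \<gamma>], intro conjI g allI impI)
    fix K :: "'a \<Rightarrow> real" and E :: "'a set" and x :: 'a and r :: real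
    assume Km: "K \<in> borel_measurable lebesgue"
      and Kb: "\<forall>y. y \<noteq> 0 \<longrightarrow> lam * norm y powr (- real DIM('a) - s) \<le> K y
                   \<and> K y \<le> Lam * norm y powr (- real DIM('a) - s) \<and> K y = K (- y)"
      and E: "E \<in> sets borel" and fr: "x \<in> frontier E" and r: "0 < r"
      and small: "measure lebesgue (E \<inter> ball x r) \<le> \<gamma> * measure lebesgue (ball (0::'a) r)"
    define A where "A = ball x r - ball x (r/2)"
    define e where "e = - d - s"
    have key': "integral A (\<lambda>y. chi_tilde E y * K (x - y)) \<ge>
      lam * r powr e * measure lebesgue A - 2 * Lam * (r/2) powr e * measure lebesgue (A \<inter> E)"
      using key[OF Km Kb E r assms(3,4,1), of x] unfolding A_def e_def d_def by simp
    have mA: "measure lebesgue A \<ge> q * r ^ DIM('a) * V"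
    proof -
      have "measure lebesgue (ball x r) \<le> measure lebesgue A + measure lebesgue (ball x (r/2))"
      proof -
        have eqb: "ball x r = A \<union> ball x (r/2)" unfolding A_def using r by auto
        have As: "A \<in> sets lebesgue" unfolding A_def by simp
        have "measure lebesgue (A \<union> ball x (r/2)) \<le> measure lebesgue A + measure lebesgue (ball x (r/2))"
          by (rule measure_Un_le[OF As]) simp
        then show ?thesis by (simp only: eqb)
      qed
      moreover have "measure lebesgue (ball x r) = r ^ DIM('a) * V"
        "measure lebesgue (ball x (r/2)) = (r/2) ^ DIM('a) * V"
        using measure_ball_scale[of r x] measure_ball_scale[of "r/2" x] r unfolding V_def by auto
      moreover have "(r/2) ^ DIM('a) = (1/2) ^ DIM('a) * r ^ DIM('a)"
        by (simp add: power_divide)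
      ultimately show ?thesis unfolding q_def by (simp add: algebra_simps)
    qed
    have mAE: "measure lebesgue (A \<inter> E) \<le> \<gamma> * r ^ DIM('a) * V"
    proof -
      have "measure lebesgue (A \<inter> E) \<le> measure lebesgue (E \<inter> ball x r)"
      proof (rule measure_mono_fmeasurable)
        show "A \<inter> E \<subseteq> E \<inter> ball x r" unfolding A_def by blast
        show "A \<inter> E \<in> sets lebesgue" using E unfolding A_def by simp
        have "ball x r \<inter> E \<in> fmeasurable lebesgue"
          by (rule fmeasurable_Int_fmeasurable) (use E in simp_all)
        then show "E \<inter> ball x r \<in> fmeasurable lebesgue" by (simp add: Int_commute)
      qed
      also have "\<dots> \<le> \<gamma> * (r ^ DIM('a) * V)"
        using small measure_ball_scale[of r "0::'a"] r unfolding V_def by simp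
      finally show ?thesis by simp
    qed
    have r2: "(r/2) powr e = r powr e * 2 powr (d + s)"
    proof -
      have a: "(r/2) powr e = r powr e / 2 powr e" using r by (simp add: powr_divide)
      have "e = - (d + s)" unfolding e_def by simp
      then have b: "2 powr e = 1 / 2 powr (d + s)" using powr_minus_divide[of 2 "d+s"] by (simp only:)
      show ?thesis unfolding a b by simp
    qed
    have P: "r powr e * r ^ DIM('a) = 1 / r powr s"
    proof -
      have "r powr e * r ^ DIM('a) = r powr e * r powr d"
        using powr_realpow[OF r, of "DIM('a)"] unfolding d_def by simp
      also have "\<dots> = r powr (e + d)" by (simp only: powr_add)
      also have "e + d = - s" unfolding e_def by simp
      also have "r powr (- s) = 1 / r powr s" by (rule powr_minus_divide)
      finally show ?thesis .
    qed
    have re: "0 < r powr e" using r by simp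
    have t1: "lam * r powr e * measure lebesgue A \<ge> lam * r powr e * (q * r ^ DIM('a) * V)"
      by (rule mult_left_mono[OF mA]) (use re assms in simp)
    have t2: "2 * Lam * (r/2) powr e * measure lebesgue (A \<inter> E) \<le> 2 * Lam * (r/2) powr e * (\<gamma> * r ^ DIM('a) * V)"
      by (rule mult_left_mono[OF mAE]) (use r assms in simp)
    have eq: "lam * r powr e * (q * r ^ DIM('a) * V) - 2 * Lam * (r/2) powr e * (\<gamma> * r ^ DIM('a) * V)
       = C * (r powr e * r ^ DIM('a))"
      unfolding r2 \<gamma>_def C_def using assms by (simp add: field_simps)
    have "C / r powr s \<le> lam * r powr e * measure lebesgue A - 2 * Lam * (r/2) powr e * measure lebesgue (A \<inter> E)"
    proof -
      have "C / r powr s = C * (r powr e * r ^ DIM('a))" using P by simp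
      then show ?thesis using t1 t2 eq by linarith
    qed
    then show "C / r powr s \<le> integral (ball x r - ball x (r/2)) (\<lambda>y. chi_tilde E y * K (x - y))"
      using key' unfolding A_def by linarith
  qed
qed

end
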